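(* Let $d\ge 2$ and $m\in\mathbb{N}$ with $m\ge 2$, and put $N=m^d$. Then jittered sampling with $N$ points does not minimize the mean ${\mathcal L}_2$-discrepancy among stratified samples from convex equivolume partitions of $[0,1]^d$ into $N$ sets. That is, there exists a convex equivolume partition $\tilde{\mathbf\Omega}=(\tilde\Omega_1,\ldots,\tilde\Omega_N)$ of $[0,1]^d$ such that \[ \mathbb{E}\,{\mathcal L}_2^2({\mathcal P}_{\tilde{\mathbf\Omega}})<\mathbb{E}\,{\mathcal L}_2^2({\mathcal P}_{\mathrm{jit}}), \] where ${\mathcal P}_{\mathrm{jit}}$ is the stratified sample of the jittered partition.
   Context: A partition $\mathbf\Omega=(\Omega_1,\ldots,\Omega_N)$ of a compact convex set $K\subset\mathbb{R}^d$ with $|K|>0$ is a tuple of measurable sets of positive Lebesgue measure with $\Omega_1\cup\cdots\cup\Omega_N=K$ such that two different sets have no interior points in common. It is equivolume if $|\Omega_1|=\cdots=|\Omega_N|$, and convex if every $\Omega_i$ is convex. The stratified sample ${\mathcal P}_{\mathbf\Omega}=\{X_1,\ldots,X_N\}$ consists of independent random points with $X_i$ uniformly distributed in $\Omega_i$. For $K=[0,1]^d$ and a set ${\mathcal P}$ of $N$ points in $[0,1]^d$, the discrepancy function is $d_{\mathcal P}(\mathbf x)=\frac{\#({\mathcal P}\cap[\mathbf 0,\mathbf x])}{N}-\prod_{k=1}^d x_k$ for $\mathbf x\in[0,1]^d$, where $[\mathbf 0,\mathbf x]=\prod_{k=1}^d[0,x_k]$. The ${\mathcal L}_2$-discrepancy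 is ${\mathcal L}_2({\mathcal P})=\big(\int_{[0,1]^d}d_{\mathcal P}(\mathbf x)^2\,\mathrm d\mathbf x\big)^{1/2}$, and $\mathbb{E}\,{\mathcal L}_2^2$ is its mean square over the randomness of the sample. The jittered partition of $[0,1]^d$ with $N=m^d$ sets consists of the $m^d$ closed cubes $\prod_{k=1}^d[(j_k-1)/m,\,j_k/m]$ with $j_k\in\{1,\ldots,m\}$. *)

theory Defs
  imports "HOL-Probability.Probability"
begin

text \<open>Points of [0,1]^d are modelled as vectors in real^'n with d = CARD('n).
  A partition is indexed by a finite index set I.\<close>

definition is_partition :: "'i set \<Rightarrow> ('i \<Rightarrow> (real^'n) set) \<Rightarrow> (real^'n) set \<Rightarrow> bool" where
  "is_partition I \<Omega> K \<longleftrightarrow>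
     finite I \<and> I \<noteq> {} \<and>
     (\<forall>i\<in>I. \<Omega> i \<in> sets lebesgue \<and> emeasure lebesgue (\<Omega> i) > 0) \<and>
     (\<Union>i\<in>I. \<Omega> i) = K \<and>
     (\<forall>i\<in>I. \<forall>j\<in>I. i \<noteq> j \<longrightarrow> interior (\<Omega> i) \<inter> interior (\<Omega> j) = {})"

definition is_equivolume :: "'i set \<Rightarrow> ('i \<Rightarrow> (real^'n) set) \<Rightarrow> bool" where
  "is_equivolume I \<Omega> \<longleftrightarrow> (\<forall>i\<in>I. \<forall>j\<in>I. measure lebesgue (\<Omega> i) = measure lebesgue (\<Omega> j))"

definition is_convex_partition :: "'i set \<Rightarrow> ('i \<Rightarrow> (real^'n) set) \<Rightarrow> bool" where
  "is_convex_partition I \<Omega> \<longleftrightarrow> (\<forall>i\<in>I. convex (\<Omega> i))"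

definition discrepancy_fun :: "'i set \<Rightarrow> ('i \<Rightarrow> real^'n) \<Rightarrow> real^'n \<Rightarrow> real" where
  "discrepancy_fun I X x =
     real (card {i\<in>I. X i \<in> cbox 0 x}) / real (card I) - (\<Prod>k\<in>UNIV. x $ k)"

definition L2_disc_sq :: "'i set \<Rightarrow> ('i \<Rightarrow> real^'n) \<Rightarrow> real" where
  "L2_disc_sq I X = (\<integral>x. (discrepancy_fun I X x)\<^sup>2 \<partial>(lebesgue_on (cbox 0 1)))"

definition stratified_law :: "'i set \<Rightarrow> ('i \<Rightarrow> (real^'n) set) \<Rightarrow> ('i \<Rightarrow> real^'n) measure" where
  "stratified_law I \<Omega> = PiM I (\<lambda>i. uniform_measure lebesgue (\<Omega> i))"

definition mean_L2_disc_sq :: "'i set \<Rightarrow> ('i \<Rightarrow> (real^'n) set) \<Rightarrow> real" where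
  "mean_L2_disc_sq I \<Omega> = (\<integral>X. L2_disc_sq I X \<partial>(stratified_law I \<Omega>))"

definition jitter_index :: "nat \<Rightarrow> ('n::finite \<Rightarrow> nat) set" where
  "jitter_index m = PiE UNIV (\<lambda>_. {1..m})"

definition jittered :: "nat \<Rightarrow> ('n::finite \<Rightarrow> nat) \<Rightarrow> (real^'n) set" where
  "jittered m j = cbox (\<chi> k. (real (j k) - 1) / real m) (\<chi> k. real (j k) / real m)"

end

theory Submission
  imports Defs
begin

definition phi :: "real \<Rightarrow> real \<Rightarrow> real \<Rightarrow> real" where
  "phi a b t = max 0 (min b t - a) / (b - a)"

lemma phi_sq_has_integral:
  assumes "0 \<le> a" "a < b" "b \<le> 1"
  shows "((\<lambda>t. (phi a b t)\<^sup>2) has_integral (1 - a - 2 * (b - a) / 3)) {0..1}"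
proof -
  have i1: "((\<lambda>t. (phi a b t)\<^sup>2) has_integral 0) {0..a}"
  proof -
    have "((\<lambda>t. 0::real) has_integral 0) {0..a}" by simp
    then show ?thesis
      by (rule has_integral_eq[rotated]) (auto simp: phi_def)
  qed
  define c where "c = 1 / (3 * (b-a)^2)"
  have d: "((\<lambda>t. (t - a)^3 * c) has_vector_derivative ((t - a)/(b-a))\<^sup>2) (at t within {a..b})" for t
  proof -
    have "((\<lambda>t. (t - a)^3 * c) has_real_derivative (3 * (t - a)^2 * c)) (at t within {a..b})"
      by (auto intro!: derivative_eq_intros simp: eval_nat_numeral)
    moreover have "3 * (t - a)^2 * c = ((t - a)/(b-a))\<^sup>2"
      using assms by (simp add: power_divide c_def)
    ultimately show ?thesis by (simp add: has_real_derivative_iff_has_vector_derivative)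
  qed
  have "((\<lambda>t. ((t - a)/(b-a))\<^sup>2) has_integral ((b - a)^3 * c - (a-a)^3 * c)) {a..b}"
    using assms by (intro fundamental_theorem_of_calculus d) auto
  moreover have "(b - a)^3 * c - (a-a)^3 * c = (b - a)/3"
    using assms by (simp add: c_def power2_eq_square power3_eq_cube)
  ultimately have "((\<lambda>t. ((t - a)/(b-a))\<^sup>2) has_integral ((b - a)/3)) {a..b}"
    by (simp only:)
  then have i2: "((\<lambda>t. (phi a b t)\<^sup>2) has_integral ((b - a)/3)) {a..b}"
    by (rule has_integral_eq[rotated]) (auto simp: phi_def)
  have "((\<lambda>t. 1::real) has_integral (1 - b)) {b..1}"
    using has_integral_const_real[of "1::real" b 1] assms by simp
  then have i3: "((\<lambda>t. (phi a b t)\<^sup>2) has_integral (1 - b)) {b..1}"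
    by (rule has_integral_eq[rotated]) (use assms in \<open>auto simp: phi_def\<close>)
  have "((\<lambda>t. (phi a b t)\<^sup>2) has_integral (0 + (b - a)/3)) {0..b}"
    using assms by (intro has_integral_combine[OF _ _ i1 i2]) auto
  then have "((\<lambda>t. (phi a b t)\<^sup>2) has_integral ((0 + (b - a)/3) + (1 - b))) {0..1}"
    using assms by (intro has_integral_combine[OF _ _ _ i3]) auto
  then show ?thesis by (simp add: field_simps)
qed

lemma Basis_vec_real: "(Basis :: (real^'n) set) = range (\<lambda>k. axis k 1)"
  by (auto simp: Basis_vec_def)

lemma inj_axis1: "inj (\<lambda>k::'n::finite. axis k (1::real))"
  by (auto simp: inj_def axis_eq_axis)

lemma sum_basis_nth:
  fixes f :: "real^'n::finite \<Rightarrow> real"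
  shows "(\<Sum>b\<in>Basis. f b *\<^sub>R b) $ k = f (axis k 1)"
proof -
  have "(\<Sum>b\<in>Basis. f b *\<^sub>R b) $ k = (\<Sum>b\<in>Basis. f b * (b $ k))"
    by (simp add: sum_component)
  also have "\<dots> = (\<Sum>i\<in>UNIV. f (axis i 1) * (axis i (1::real) $ k))"
    unfolding Basis_vec_real by (subst sum.reindex[OF inj_axis1]) (simp add: o_def)
  also have "\<dots> = f (axis k 1)"
    by (simp add: axis_def if_distrib cong: if_cong)
  finally show ?thesis .
qed

lemma lborel_integral_prod_vec:
  fixes h :: "'n::finite \<Rightarrow> real \<Rightarrow> real"
  assumes int: "\<And>k. integrable lborel (h k)"
  shows "(\<integral>x. (\<Prod>k\<in>UNIV. h k (x $ k)) \<partial>(lborel :: (real^'n) measure)) = (\<Prod>k\<in>UNIV. \<integral>t. h k t \<partial>lborel)"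
proof -
  interpret product_sigma_finite "\<lambda>_::real^'n. lborel :: real measure"
    by standard
  define H where "H = (\<lambda>b::real^'n. h (inv (\<lambda>k. axis k (1::real)) b))"
  have H: "H (axis k 1) = h k" for k
    unfolding H_def by (simp add: inv_f_f[OF inj_axis1])
  have meas: "(\<lambda>x::real^'n. \<Prod>k\<in>UNIV. h k (x $ k)) \<in> borel_measurable borel"
    using int by measurable
  have "(\<integral>x. (\<Prod>k\<in>UNIV. h k (x $ k)) \<partial>(lborel :: (real^'n) measure))
      = (\<integral>f. (\<Prod>k\<in>UNIV. h k ((\<Sum>b\<in>Basis. f b *\<^sub>R b) $ k)) \<partial>(\<Pi>\<^sub>M b\<in>Basis. lborel))"
    by (subst lborel_eq) (subst integral_distr, auto intro: meas)
  also have "\<dots> = (\<integral>f. (\<Prod>b\<in>Basis. H b (f b)) \<partial>(\<Pi>\<^sub>M b\<in>Basis. lborel))"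
  proof (rule Bochner_Integration.integral_cong[OF refl])
    fix f :: "real^'n \<Rightarrow> real"
    have "(\<Prod>b\<in>Basis. H b (f b)) = (\<Prod>k\<in>UNIV. H (axis k 1) (f (axis k 1)))"
      unfolding Basis_vec_real by (subst prod.reindex[OF inj_axis1]) (simp add: o_def)
    then show "(\<Prod>k\<in>UNIV. h k ((\<Sum>b\<in>Basis. f b *\<^sub>R b) $ k)) = (\<Prod>b\<in>Basis. H b (f b))"
      unfolding sum_basis_nth by (simp add: H)
  qed
  also have "\<dots> = (\<Prod>b\<in>Basis. \<integral>t. H b t \<partial>lborel)"
    by (rule product_integral_prod) (auto simp: Basis_vec_real H int)
  also have "\<dots> = (\<Prod>k\<in>UNIV. \<integral>t. h k t \<partial>lborel)"
    unfolding Basis_vec_real by (subst prod.reindex[OF inj_axis1]) (simp add: o_def H)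
  finally show ?thesis .
qed

lemma indicator_cbox01_prod:
  "indicator (cbox 0 (1::real^'n::finite)) x = (\<Prod>k\<in>UNIV. indicator {0..1::real} (x $ k) :: real)"
proof (cases "x \<in> cbox 0 1")
  case True
  then show ?thesis by (simp add: mem_box_cart)
next
  case False
  then obtain i where "x $ i \<notin> {0..1}" by (auto simp: mem_box_cart)
  then have B: "(\<Prod>k\<in>UNIV. indicator {0..1::real} (x $ k)) = (0::real)"
    by (subst prod_zero_iff) (auto intro!: exI[of _ i])
  have A: "indicator (cbox 0 (1::real^'n)) x = (0::real)" using False by simp
  show ?thesis by (simp only: A B)
qed

lemma integral_prod_cbox01:
  fixes g :: "'n::finite \<Rightarrow> real \<Rightarrow> real"
  assumes meas: "\<And>k. g k \<in> borel_measurable borel"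
    and nonneg: "\<And>k t. 0 \<le> g k t"
    and hi: "\<And>k. (g k has_integral I k) {0..1}"
  shows "(\<integral>x. (\<Prod>k\<in>UNIV. g k (x$k)) \<partial>lebesgue_on (cbox 0 (1::real^'n))) = (\<Prod>k\<in>UNIV. I k)"
proof -
  define h where "h = (\<lambda>k t. indicator {0..1::real} t * g k t)"
  have hmeas: "h k \<in> borel_measurable borel" for k
    unfolding h_def using meas by measurable
  have si: "set_integrable lebesgue {0..1} (g k)" for k
    using hi nonneg by (intro nonnegative_absolutely_integrable_1) (auto simp: integrable_on_def)
  have intleb: "integrable lebesgue (h k)" for k
    using si[of k] by (simp add: set_integrable_def h_def)
  have intk: "integrable lborel (h k)" for k
    using intleb[of k] hmeas[of k] by (simp add: integrable_completion)
  have ik: "(\<integral>t. h k t \<partial>lborel) = I k" for k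
  proof -
    have "(\<integral>t. h k t \<partial>lborel) = (\<integral>t. h k t \<partial>lebesgue)"
      using hmeas[of k] by (simp add: integral_completion)
    also have "\<dots> = (LINT t:{0..1}|lebesgue. g k t)"
      by (simp add: set_lebesgue_integral_def h_def)
    also have "\<dots> = integral {0..1} (g k)"
      using si[of k] by (rule set_lebesgue_integral_eq_integral)
    also have "\<dots> = I k" using hi[of k] by (rule integral_unique)
    finally show ?thesis .
  qed
  have Fmeas: "(\<lambda>x::real^'n. indicator (cbox 0 1) x *\<^sub>R (\<Prod>k\<in>UNIV. g k (x$k))) \<in> borel_measurable borel"
    using meas by measurable
  have "(\<integral>x. (\<Prod>k\<in>UNIV. g k (x$k)) \<partial>lebesgue_on (cbox 0 (1::real^'n)))
      = (\<integral>x. indicator (cbox 0 1) x *\<^sub>R (\<Prod>k\<in>UNIV. g k (x$k)) \<partial>lebesgue)"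
    by (rule integral_restrict_space) simp
  also have "\<dots> = (\<integral>x. indicator (cbox 0 1) x *\<^sub>R (\<Prod>k\<in>UNIV. g k (x$k)) \<partial>lborel)"
    using Fmeas by (simp add: integral_completion)
  also have "\<dots> = (\<integral>x. (\<Prod>k\<in>UNIV. h k (x $ k)) \<partial>lborel)"
    by (intro Bochner_Integration.integral_cong refl)
       (simp add: indicator_cbox01_prod h_def prod.distrib)
  also have "\<dots> = (\<Prod>k\<in>UNIV. \<integral>t. h k t \<partial>lborel)"
    by (rule lborel_integral_prod_vec[OF intk])
  also have "\<dots> = (\<Prod>k\<in>UNIV. I k)" by (simp add: ik)
  finally show ?thesis .
qed

lemma measure_lebesgue_cbox_cart:
  fixes a b :: "real^'n::finite"
  shows "measure lebesgue (cbox a b) = (if \<forall>k. a$k \<le> b$k then \<Prod>k\<in>UNIV. b$k - a$k else 0)"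
proof -
  have "measure lebesgue (cbox a b) = measure lborel (cbox a b)"
    by (simp add: measure_completion)
  also have "\<dots> = (if \<forall>k. a$k \<le> b$k then \<Prod>k\<in>UNIV. b$k - a$k else 0)"
    using interval_ne_empty_cart(1)[of a b] by (auto simp add: content_cbox_if_cart)
  finally show ?thesis .
qed

lemma partition_measure_sum:
  fixes \<Omega> :: "'i \<Rightarrow> (real^'n::finite) set"
  assumes fin: "finite I"
    and meas: "\<And>i. i \<in> I \<Longrightarrow> \<Omega> i \<in> lmeasurable"
    and conv: "\<And>i. i \<in> I \<Longrightarrow> convex (\<Omega> i)"
    and disj: "\<And>i j. i \<in> I \<Longrightarrow> j \<in> I \<Longrightarrow> i \<noteq> j \<Longrightarrow> interior (\<Omega> i) \<inter> interior (\<Omega> j) = {}"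
    and S: "S \<in> sets lebesgue"
  shows "(\<Sum>i\<in>I. measure lebesgue (\<Omega> i \<inter> S)) = measure lebesgue ((\<Union>i\<in>I. \<Omega> i) \<inter> S)"
proof -
  have "measure lebesgue (\<Union>i\<in>I. \<Omega> i \<inter> S) = (\<Sum>i\<in>I. measure lebesgue (\<Omega> i \<inter> S))"
  proof (rule measure_negligible_finite_Union_image[OF fin])
    show "\<Omega> i \<inter> S \<in> lmeasurable" if "i \<in> I" for i
      using meas[OF that] S by (intro fmeasurable_Int_fmeasurable) auto
    show "pairwise (\<lambda>i j. negligible ((\<Omega> i \<inter> S) \<inter> (\<Omega> j \<inter> S))) I"
      unfolding pairwise_def
    proof (intro ballI impI)
      fix i j assume ij: "i \<in> I" "j \<in> I" "i \<noteq> j"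
      have "(\<Omega> i \<inter> S) \<inter> (\<Omega> j \<inter> S) \<subseteq> frontier (\<Omega> i) \<union> frontier (\<Omega> j)"
      proof
        fix x assume x: "x \<in> (\<Omega> i \<inter> S) \<inter> (\<Omega> j \<inter> S)"
        show "x \<in> frontier (\<Omega> i) \<union> frontier (\<Omega> j)"
        proof (cases "x \<in> interior (\<Omega> i)")
          case True
          then have "x \<notin> interior (\<Omega> j)" using disj[OF ij] by blast
          then show ?thesis using x closure_subset[of "\<Omega> j"] by (auto simp: frontier_def)
        next
          case False
          then show ?thesis using x closure_subset[of "\<Omega> i"] by (auto simp: frontier_def)
        qed
      qed
      moreover have "negligible (frontier (\<Omega> i) \<union> frontier (\<Omega> j))"
        using conv ij by (intro negligible_Un negligible_convex_frontier) auto
      ultimately show "negligible ((\<Omega> i \<inter> S) \<inter> (\<Omega> j \<inter> S))"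
        by (rule negligible_subset[rotated])
    qed
  qed
  moreover have "(\<Union>i\<in>I. \<Omega> i \<inter> S) = (\<Union>i\<in>I. \<Omega> i) \<inter> S" by blast
  ultimately show ?thesis by simp
qed

lemma PiM_integral_two:
  fixes M :: "'i \<Rightarrow> 'a measure" and f g :: "'a \<Rightarrow> real"
  assumes ps: "\<And>i. prob_space (M i)" and fin: "finite I" and i: "i\<in>I" and j: "j\<in>I" and ij: "i \<noteq> j"
    and f: "integrable (M i) f" and g: "integrable (M j) g"
  shows "integrable (PiM I M) (\<lambda>X. f (X i) * g (X j))"
    "(\<integral>X. f (X i) * g (X j) \<partial>PiM I M) = (\<integral>y. f y \<partial>M i) * (\<integral>y. g y \<partial>M j)"
proof -
  interpret product_sigma_finite M
    by (simp add: product_sigma_finite_def prob_space_imp_sigma_finite ps)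
  define F where "F = (\<lambda>k y. (if k = i then f y else 1) * (if k = j then g y else 1))"
  have Fint: "integrable (M k) (F k)" for k
  proof -
    interpret prob_space "M k" by (rule ps)
    show ?thesis using f g ij by (cases "k = i"; cases "k = j") (auto simp: F_def prob_space)
  qed
  have Fi: "(\<integral>y. F k y \<partial>M k) = (if k = i then (\<integral>y. f y \<partial>M i) else 1) * (if k = j then (\<integral>y. g y \<partial>M j) else 1)" for k
  proof -
    interpret prob_space "M k" by (rule ps)
    show ?thesis using ij by (cases "k = i"; cases "k = j") (auto simp: F_def prob_space)
  qed
  have eq: "(\<Prod>k\<in>I. F k (X k)) = f (X i) * g (X j)" for X
    using fin i j by (simp add: F_def prod.distrib if_distrib[of "\<lambda>h. h (X _)"] cong: if_cong)
  have "integrable (PiM I M) (\<lambda>X. \<Prod>k\<in>I. F k (X k))"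
    by (rule product_integrable_prod[OF fin Fint])
  then show "integrable (PiM I M) (\<lambda>X. f (X i) * g (X j))" by (simp add: eq)
  have "(\<integral>X. (\<Prod>k\<in>I. F k (X k)) \<partial>PiM I M) = (\<Prod>k\<in>I. \<integral>y. F k y \<partial>M k)"
    by (rule product_integral_prod[OF fin Fint])
  then show "(\<integral>X. f (X i) * g (X j) \<partial>PiM I M) = (\<integral>y. f y \<partial>M i) * (\<integral>y. g y \<partial>M j)"
    using fin i j by (simp add: eq Fi prod.distrib cong: if_cong)
qed

lemma PiM_integral_one:
  fixes M :: "'i \<Rightarrow> 'a measure" and f :: "'a \<Rightarrow> real"
  assumes ps: "\<And>i. prob_space (M i)" and fin: "finite I" and i: "i\<in>I"
    and f: "integrable (M i) f"
  shows "integrable (PiM I M) (\<lambda>X. f (X i))"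
    "(\<integral>X. f (X i) \<partial>PiM I M) = (\<integral>y. f y \<partial>M i)"
proof -
  interpret product_sigma_finite M
    by (simp add: product_sigma_finite_def prob_space_imp_sigma_finite ps)
  define F where "F = (\<lambda>k y. (if k = i then f y else 1))"
  have Fint: "integrable (M k) (F k)" for k
  proof -
    interpret prob_space "M k" by (rule ps)
    show ?thesis using f by (cases "k = i") (auto simp: F_def prob_space)
  qed
  have Fi: "(\<integral>y. F k y \<partial>M k) = (if k = i then (\<integral>y. f y \<partial>M i) else 1)" for k
  proof -
    interpret prob_space "M k" by (rule ps)
    show ?thesis by (cases "k = i") (auto simp: F_def prob_space)
  qed
  have eq: "(\<Prod>k\<in>I. F k (X k)) = f (X i)" for X
    using fin i by (simp add: F_def if_distrib[of "\<lambda>h. h (X _)"] cong: if_cong)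
  have "integrable (PiM I M) (\<lambda>X. \<Prod>k\<in>I. F k (X k))"
    by (rule product_integrable_prod[OF fin Fint])
  then show "integrable (PiM I M) (\<lambda>X. f (X i))" by (simp add: eq)
  have "(\<integral>X. (\<Prod>k\<in>I. F k (X k)) \<partial>PiM I M) = (\<Prod>k\<in>I. \<integral>y. F k y \<partial>M k)"
    by (rule product_integral_prod[OF fin Fint])
  then show "(\<integral>X. f (X i) \<partial>PiM I M) = (\<integral>y. f y \<partial>M i)"
    using fin i by (simp add: eq Fi cong: if_cong)
qed

lemma vec_nth_borel[measurable]: "(\<lambda>x::real^'n::finite. x $ k) \<in> borel_measurable borel"
  by (intro borel_measurable_continuous_onI continuous_intros)

lemma vec_nth_lebesgue[measurable]: "(\<lambda>x::real^'n::finite. x $ k) \<in> borel_measurable lebesgue"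
  by (rule measurable_completion) simp

definition pfun :: "('i \<Rightarrow> (real^'n::finite) set) \<Rightarrow> 'i \<Rightarrow> real^'n \<Rightarrow> real" where
  "pfun \<Omega> i x = measure lebesgue (\<Omega> i \<inter> cbox 0 x) / measure lebesgue (\<Omega> i)"

lemma disc_eq:
  fixes X :: "'i \<Rightarrow> real^'n::finite"
  assumes "finite I"
  shows "discrepancy_fun I X x = (\<Sum>i\<in>I. indicator (cbox 0 x) (X i)) / real (card I) - (\<Prod>k\<in>UNIV. x $ k)"
proof -
  have "real (card {i\<in>I. X i \<in> cbox 0 x}) = (\<Sum>i\<in>{i\<in>I. X i \<in> cbox 0 x}. 1)"
    by simp
  also have "\<dots> = (\<Sum>i\<in>I. indicator (cbox 0 x) (X i))"
    using assms by (simp add: indicator_def sum.If_cases Int_def)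
  finally show ?thesis by (simp add: discrepancy_fun_def)
qed

lemma ind_meas:
  fixes \<Omega> :: "'i \<Rightarrow> (real^'n::finite) set"
  assumes "i \<in> I"
  shows "(\<lambda>(X, x). indicator (cbox 0 x) (X i) :: real) \<in> borel_measurable ((\<Pi>\<^sub>M i\<in>I. uniform_measure lebesgue (\<Omega> i)) \<Otimes>\<^sub>M lebesgue_on (cbox 0 1))"
proof -
  have eq: "(\<lambda>(X :: 'i \<Rightarrow> real^'n, x). indicator (cbox 0 x) (X i) :: real) = (\<lambda>(X, x). if (\<forall>k. 0 \<le> (X i) $ k \<and> (X i) $ k \<le> x $ k) then 1 else 0)"
    by (auto simp: fun_eq_iff indicator_def mem_box_cart)
  let ?PS = "\<Pi>\<^sub>M i\<in>I. uniform_measure lebesgue (\<Omega> i)"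
  let ?L = "lebesgue_on (cbox 0 (1::real^'n))"
  have c1: "(\<lambda>X. X i) \<in> ?PS \<rightarrow>\<^sub>M uniform_measure lebesgue (\<Omega> i)"
    using assms by (rule measurable_component_singleton)
  have c2: "(\<lambda>y::real^'n. y $ k) \<in> borel_measurable (uniform_measure lebesgue (\<Omega> i))" for k
    by (subst measurable_cong_sets[OF sets_uniform_measure refl]) simp
  have m1[measurable]: "(\<lambda>p. fst p i $ k) \<in> borel_measurable (?PS \<Otimes>\<^sub>M ?L)" for k
    using measurable_comp[OF measurable_comp[OF measurable_fst c1] c2] by (simp add: o_def)
  have m2[measurable]: "(\<lambda>p. snd p $ k) \<in> borel_measurable (?PS \<Otimes>\<^sub>M ?L)" for k
    using measurable_comp[OF measurable_snd measurable_restrict_space1[OF vec_nth_lebesgue]] by (simp add: o_def)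
  show ?thesis unfolding eq by measurable
qed

lemma prodx_meas:
  "(\<lambda>(X, x::real^'n::finite). \<Prod>k\<in>UNIV. x $ k) \<in> borel_measurable (M \<Otimes>\<^sub>M lebesgue_on (cbox 0 1))"
proof -
  have m2[measurable]: "(\<lambda>p. snd p $ k) \<in> borel_measurable (M \<Otimes>\<^sub>M lebesgue_on (cbox 0 (1::real^'n)))" for k
    using measurable_comp[OF measurable_snd measurable_restrict_space1[OF vec_nth_lebesgue]] by (simp add: o_def)
  show ?thesis by (simp add: case_prod_beta') measurable
qed

lemma prod_vec_01:
  fixes x :: "real^'n::finite"
  assumes "x \<in> cbox 0 1"
  shows "0 \<le> (\<Prod>k\<in>UNIV. x $ k)" "(\<Prod>k\<in>UNIV. x $ k) \<le> 1"
  using assms by (auto simp: mem_box_cart intro!: prod_nonneg prod_le_1)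

lemma pointwise_var:
  fixes I :: "'i set" and \<Omega> :: "'i \<Rightarrow> (real^'n::finite) set"
  assumes fin: "finite I" and ne: "I \<noteq> {}"
    and meas: "\<And>i. \<Omega> i \<in> sets lebesgue"
    and pos: "\<And>i. emeasure lebesgue (\<Omega> i) \<noteq> 0"
    and fint: "\<And>i. emeasure lebesgue (\<Omega> i) \<noteq> \<infinity>"
    and sumP: "(\<Sum>i\<in>I. pfun \<Omega> i x) = real (card I) * (\<Prod>k\<in>UNIV. x$k)"
  shows "(\<integral>X. (discrepancy_fun I X x)\<^sup>2 \<partial>PiM I (\<lambda>i. uniform_measure lebesgue (\<Omega> i)))
      = (\<Sum>i\<in>I. pfun \<Omega> i x * (1 - pfun \<Omega> i x)) / (real (card I))\<^sup>2"
proof -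
  define M where "M = (\<lambda>i. uniform_measure lebesgue (\<Omega> i))"
  have psM: "prob_space (M i)" for i unfolding M_def using pos fint by (rule prob_space_uniform_measure)
  define N where "N = real (card I)"
  have Npos: "N > 0" using fin ne by (simp add: N_def card_gt_0_iff)
  define P where "P i = pfun \<Omega> i x" for i
  define Y where "Y i y = indicator (cbox 0 x) y - P i" for i y
  have cb: "cbox 0 x \<in> sets (M i)" for i by (simp add: M_def)
  have Yint: "integrable (M i) (Y i)" for i
  proof -
    interpret prob_space "M i" by (rule psM)
    show ?thesis unfolding Y_def[abs_def]
      by (intro Bochner_Integration.integrable_diff integrable_real_indicator cb) (auto simp: less_top[symmetric])
  qed
  have mind: "(\<integral>y. indicator (cbox 0 x) y \<partial>M i) = P i" for i
  proof -
    have "(\<integral>y. indicator (cbox 0 x) y \<partial>M i) = measure (M i) (cbox 0 x)"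
      by (simp add: M_def)
    also have "\<dots> = P i"
      using pos fint by (simp add: M_def P_def pfun_def)
    finally show ?thesis .
  qed
  have EY: "(\<integral>y. Y i y \<partial>M i) = 0" for i
  proof -
    interpret prob_space "M i" by (rule psM)
    have "(\<integral>y. Y i y \<partial>M i) = (\<integral>y. indicator (cbox 0 x) y \<partial>M i) - (\<integral>y. P i \<partial>M i)"
      unfolding Y_def
      by (intro Bochner_Integration.integral_diff integrable_real_indicator cb) (auto simp: less_top[symmetric])
    then show ?thesis using mind[of i] by (simp add: prob_space)
  qed
  have Ysq: "Y i y * Y i y = indicator (cbox 0 x) y * (1 - 2 * P i) + (P i)\<^sup>2" for i y
    by (cases "y \<in> cbox 0 x") (simp_all add: Y_def power2_eq_square algebra_simps)
  have Y2int: "integrable (M i) (\<lambda>y. Y i y * Y i y)" for i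
  proof -
    interpret prob_space "M i" by (rule psM)
    show ?thesis unfolding Ysq
      by (intro Bochner_Integration.integrable_add integrable_mult_left integrable_real_indicator cb) (auto simp: less_top[symmetric])
  qed
  have EY2: "(\<integral>y. Y i y * Y i y \<partial>M i) = P i * (1 - P i)" for i
  proof -
    interpret prob_space "M i" by (rule psM)
    have "(\<integral>y. Y i y * Y i y \<partial>M i) = (\<integral>y. indicator (cbox 0 x) y * (1 - 2 * P i) \<partial>M i) + (\<integral>y. (P i)\<^sup>2 \<partial>M i)"
      unfolding Ysq
      by (intro Bochner_Integration.integral_add integrable_mult_left integrable_real_indicator cb) (auto simp: less_top[symmetric])
    also have "\<dots> = P i * (1 - 2 * P i) + (P i)\<^sup>2"
      using mind[of i] by (simp add: prob_space)
    finally show ?thesis by (simp add: power2_eq_square algebra_simps)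
  qed
  have pairint: "integrable (PiM I M) (\<lambda>X. Y i (X i) * Y j (X j))" if "i \<in> I" "j \<in> I" for i j
  proof (cases "i = j")
    case True
    show ?thesis using PiM_integral_one(1)[where M=M, OF psM fin that(1) Y2int[of i]] True by simp
  next
    case False
    show ?thesis using PiM_integral_two(1)[where M=M, OF psM fin that False Yint Yint] .
  qed
  have pairval: "(\<integral>X. Y i (X i) * Y j (X j) \<partial>PiM I M) = (if i = j then P i * (1 - P i) else 0)"
    if "i \<in> I" "j \<in> I" for i j
  proof (cases "i = j")
    case True
    show ?thesis using PiM_integral_one(2)[where M=M, OF psM fin that(1) Y2int[of i]] True EY2 by simp
  next
    case False
    show ?thesis using PiM_integral_two(2)[where M=M, OF psM fin that False Yint Yint] False EY by simp
  qed
  have DY: "discrepancy_fun I X x = (\<Sum>i\<in>I. Y i (X i)) / N" for X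
  proof -
    have "(\<Sum>i\<in>I. Y i (X i)) = (\<Sum>i\<in>I. indicator (cbox 0 x) (X i)) - (\<Sum>i\<in>I. P i)"
      by (simp add: Y_def sum_subtractf)
    also have "(\<Sum>i\<in>I. P i) = N * (\<Prod>k\<in>UNIV. x$k)"
      using sumP by (simp add: P_def N_def)
    finally show ?thesis
      using Npos by (simp add: disc_eq[OF fin] N_def[symmetric] field_simps)
  qed
  have sq: "(discrepancy_fun I X x)\<^sup>2 = (\<Sum>i\<in>I. \<Sum>j\<in>I. Y i (X i) * Y j (X j)) / N\<^sup>2" for X
    by (simp add: DY power2_eq_square sum_product)
  have "(\<integral>X. (discrepancy_fun I X x)\<^sup>2 \<partial>PiM I M) = (\<integral>X. (\<Sum>i\<in>I. \<Sum>j\<in>I. Y i (X i) * Y j (X j)) \<partial>PiM I M) / N\<^sup>2"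
    by (simp add: sq)
  also have "(\<integral>X. (\<Sum>i\<in>I. \<Sum>j\<in>I. Y i (X i) * Y j (X j)) \<partial>PiM I M) = (\<Sum>i\<in>I. \<Sum>j\<in>I. (\<integral>X. Y i (X i) * Y j (X j) \<partial>PiM I M))"
    using pairint
    by (simp add: Bochner_Integration.integral_sum Bochner_Integration.integrable_sum)
  also have "\<dots> = (\<Sum>i\<in>I. \<Sum>j\<in>I. (if i = j then P i * (1 - P i) else 0))"
    by (intro sum.cong refl) (simp add: pairval)
  also have "\<dots> = (\<Sum>i\<in>I. P i * (1 - P i))"
    using fin by simp
  finally show ?thesis by (simp add: M_def P_def N_def)
qed

lemma mean_formula:
  fixes I :: "'i set" and \<Omega> :: "'i \<Rightarrow> (real^'n::finite) set"
  assumes fin: "finite I" and ne: "I \<noteq> {}"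
    and meas: "\<And>i. \<Omega> i \<in> sets lebesgue"
    and pos: "\<And>i. emeasure lebesgue (\<Omega> i) \<noteq> 0"
    and fint: "\<And>i. emeasure lebesgue (\<Omega> i) \<noteq> \<infinity>"
    and sumP: "\<And>x. x \<in> cbox 0 1 \<Longrightarrow> (\<Sum>i\<in>I. pfun \<Omega> i x) = real (card I) * (\<Prod>k\<in>UNIV. x$k)"
  shows "mean_L2_disc_sq I \<Omega> = (\<integral>x. (\<Sum>i\<in>I. pfun \<Omega> i x * (1 - pfun \<Omega> i x)) / (real (card I))\<^sup>2 \<partial>lebesgue_on (cbox 0 1))"
proof -
  define M where "M = (\<lambda>i. uniform_measure lebesgue (\<Omega> i))"
  have psM: "prob_space (M i)" for i unfolding M_def using pos fint by (rule prob_space_uniform_measure)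
  define PS where "PS = PiM I M"
  interpret PS: prob_space PS unfolding PS_def by (rule prob_space_PiM) (rule psM)
  define L where "L = lebesgue_on (cbox 0 (1::real^'n))"
  have finL: "finite_measure L"
  proof (rule finite_measureI)
    have "emeasure L (space L) = emeasure lebesgue (cbox 0 (1::real^'n))"
      unfolding L_def by (simp add: emeasure_restrict_space)
    also have "\<dots> < \<infinity>" using emeasure_lborel_cbox_finite[of "0::real^'n" 1] by (simp add: measure_completion emeasure_completion)
    finally show "emeasure L (space L) \<noteq> \<infinity>" by simp
  qed
  interpret L: finite_measure L by (rule finL)
  interpret P2: pair_sigma_finite PS L
    by (simp add: pair_sigma_finite_def PS.sigma_finite_measure_axioms L.sigma_finite_measure_axioms)
  interpret PL: finite_measure "PS \<Otimes>\<^sub>M L"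
    by (rule finite_measure_pair_measure) (simp_all add: finL PS.finite_measure_axioms)
  define N where "N = real (card I)"
  have Npos: "N > 0" using fin ne by (simp add: N_def card_gt_0_iff)
  define D where "D = (\<lambda>(X::'i \<Rightarrow> real^'n) x. discrepancy_fun I X x)"
  have im[measurable]: "(\<lambda>p. indicator (cbox 0 (snd p)) (fst p i) :: real) \<in> borel_measurable (PS \<Otimes>\<^sub>M L)"
    if "i \<in> I" for i
    using ind_meas[OF that, of \<Omega>] by (simp add: PS_def M_def L_def case_prod_beta')
  have pm[measurable]: "(\<lambda>p. \<Prod>k\<in>UNIV. snd p $ k) \<in> borel_measurable (PS \<Otimes>\<^sub>M L)"
    using prodx_meas[of PS] by (simp add: L_def case_prod_beta')
  have Dform: "D X x = (\<Sum>i\<in>I. indicator (cbox 0 x) (X i)) / N - (\<Prod>k\<in>UNIV. x $ k)" for X x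
    by (simp add: D_def disc_eq[OF fin] N_def)
  have Dmeas: "(\<lambda>p. (D (fst p) (snd p))\<^sup>2) \<in> borel_measurable (PS \<Otimes>\<^sub>M L)"
    unfolding Dform by measurable
  have bound: "\<bar>D X x\<bar> \<le> 1" if x: "x \<in> cbox 0 1" for X x
  proof -
    have s0: "0 \<le> (\<Sum>i\<in>I. indicator (cbox 0 x) (X i) :: real)" by (simp add: sum_nonneg)
    have "(\<Sum>i\<in>I. indicator (cbox 0 x) (X i) :: real) \<le> (\<Sum>i\<in>I. 1)"
      by (intro sum_mono) (simp add: indicator_def)
    then have s1: "(\<Sum>i\<in>I. indicator (cbox 0 x) (X i) :: real) / N \<le> 1"
      using Npos by (simp add: N_def)
    have s0': "0 \<le> (\<Sum>i\<in>I. indicator (cbox 0 x) (X i) :: real) / N" using s0 Npos by simp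
    show ?thesis unfolding Dform using s1 s0' prod_vec_01[OF x] by linarith
  qed
  have integ: "integrable (PS \<Otimes>\<^sub>M L) (case_prod (\<lambda>X x. (D X x)\<^sup>2))"
  proof (rule PL.integrable_const_bound[where B=1])
    show "AE p in PS \<Otimes>\<^sub>M L. norm (case_prod (\<lambda>X x. (D X x)\<^sup>2) p) \<le> 1"
    proof (rule AE_I2)
      fix p assume "p \<in> space (PS \<Otimes>\<^sub>M L)"
      then have "snd p \<in> cbox 0 1" by (auto simp: space_pair_measure L_def)
      then have "\<bar>D (fst p) (snd p)\<bar> \<le> 1" by (rule bound)
      then show "norm (case_prod (\<lambda>X x. (D X x)\<^sup>2) p) \<le> 1"
        by (simp add: case_prod_beta' abs_square_le_1)
    qed
    show "case_prod (\<lambda>X x. (D X x)\<^sup>2) \<in> borel_measurable (PS \<Otimes>\<^sub>M L)"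
      using Dmeas by (simp add: case_prod_beta')
  qed
  have "mean_L2_disc_sq I \<Omega> = (\<integral>X. (\<integral>x. (D X x)\<^sup>2 \<partial>L) \<partial>PS)"
    by (simp add: mean_L2_disc_sq_def L2_disc_sq_def stratified_law_def PS_def M_def L_def D_def)
  also have "\<dots> = (\<integral>x. (\<integral>X. (D X x)\<^sup>2 \<partial>PS) \<partial>L)"
    by (rule P2.Fubini_integral[OF integ, symmetric])
  also have "\<dots> = (\<integral>x. (\<Sum>i\<in>I. pfun \<Omega> i x * (1 - pfun \<Omega> i x)) / N\<^sup>2 \<partial>L)"
  proof (rule Bochner_Integration.integral_cong[OF refl])
    fix x assume "x \<in> space L"
    then have x: "x \<in> cbox 0 1" by (simp add: L_def)
    show "(\<integral>X. (D X x)\<^sup>2 \<partial>PS) = (\<Sum>i\<in>I. pfun \<Omega> i x * (1 - pfun \<Omega> i x)) / N\<^sup>2"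
      using pointwise_var[OF fin ne meas pos fint sumP[OF x]]
      by (simp add: D_def PS_def M_def N_def)
  qed
  finally show ?thesis by (simp add: L_def N_def)
qed

lemma pfun_box_eq:
  fixes u v x :: "real^'n::finite"
  assumes uv: "\<And>k. 0 \<le> u$k \<and> u$k < v$k"
  shows "measure lebesgue (cbox u v \<inter> cbox 0 x) / measure lebesgue (cbox u v) = (\<Prod>k\<in>UNIV. phi (u$k) (v$k) (x$k))"
proof -
  have int: "cbox u v \<inter> cbox 0 x = cbox u (\<chi> i. min (v$i) (x$i))"
    unfolding Int_interval_cart interval_cbox_cart using uv by (simp add: max_absorb1)
  have den: "measure lebesgue (cbox u v) = (\<Prod>k\<in>UNIV. v$k - u$k)"
    using uv by (simp add: measure_lebesgue_cbox_cart less_imp_le)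
  have num: "measure lebesgue (cbox u v \<inter> cbox 0 x) = (\<Prod>k\<in>UNIV. max 0 (min (v$k) (x$k) - u$k))"
  proof (cases "\<forall>k. u$k \<le> min (v$k) (x$k)")
    case True
    then show ?thesis unfolding int by (simp add: measure_lebesgue_cbox_cart)
  next
    case False
    then obtain k where k: "min (v$k) (x$k) < u$k" by (meson not_le)
    have "(\<Prod>k\<in>UNIV. max 0 (min (v$k) (x$k) - u$k)) = 0"
      using k by (subst prod_zero_iff) (auto intro!: exI[of _ k])
    moreover have "\<not> (\<forall>k. u $ k \<le> (\<chi> i. min (v$i) (x$i)) $ k)" using False by simp
    ultimately show ?thesis unfolding int by (simp only: measure_lebesgue_cbox_cart if_False)
  qed
  show ?thesis
    unfolding num den phi_def prod_dividef ..
qed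

lemma phi_nonneg: "a < b \<Longrightarrow> 0 \<le> phi a b t"
  by (simp add: phi_def)

lemma phi_le1: "a < b \<Longrightarrow> phi a b t \<le> 1"
  by (simp add: phi_def divide_le_eq_1)

lemma phi_meas[measurable]: "phi a b \<in> borel_measurable borel"
  unfolding phi_def[abs_def] by measurable

lemma integral_pfun_sq_box:
  fixes u v :: "real^'n::finite"
  assumes uv: "\<And>k. 0 \<le> u$k \<and> u$k < v$k \<and> v$k \<le> 1"
  shows "(\<integral>x. (\<Prod>k\<in>UNIV. phi (u$k) (v$k) (x$k))\<^sup>2 \<partial>lebesgue_on (cbox 0 (1::real^'n)))
     = (\<Prod>k\<in>UNIV. 1 - u$k - 2 * (v$k - u$k) / 3)"
proof -
  have "(\<integral>x. (\<Prod>k\<in>UNIV. phi (u$k) (v$k) (x$k))\<^sup>2 \<partial>lebesgue_on (cbox 0 (1::real^'n)))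
      = (\<integral>x. (\<Prod>k\<in>UNIV. (phi (u$k) (v$k) (x$k))\<^sup>2) \<partial>lebesgue_on (cbox 0 (1::real^'n)))"
    by (simp add: prod_power_distrib)
  also have "\<dots> = (\<Prod>k\<in>UNIV. 1 - u$k - 2 * (v$k - u$k) / 3)"
  proof (rule integral_prod_cbox01)
    show "(\<lambda>t. (phi (u$k) (v$k) t)\<^sup>2) \<in> borel_measurable borel" for k by measurable
    show "0 \<le> (phi (u$k) (v$k) t)\<^sup>2" for k t by simp
    show "((\<lambda>t. (phi (u$k) (v$k) t)\<^sup>2) has_integral (1 - u$k - 2 * (v$k - u$k) / 3)) {0..1}" for k
      using uv[of k] by (intro phi_sq_has_integral) auto
  qed
  finally show ?thesis .
qed

lemma pfun_prod_meas:
  "(\<lambda>x::real^'n::finite. (\<Prod>k\<in>UNIV. phi (u$k) (v$k) (x$k))) \<in> borel_measurable (lebesgue_on S)"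
  by (intro measurable_restrict_space1) measurable

lemma null_inter_from_sum:
  fixes A :: "'i \<Rightarrow> (real^'n::finite) set"
  assumes fin: "finite I" and meas: "\<And>i. i\<in>I \<Longrightarrow> A i \<in> lmeasurable"
    and eq: "(\<Sum>i\<in>I. measure lebesgue (A i)) \<le> measure lebesgue (\<Union>i\<in>I. A i)"
    and ij: "i\<in>I" "j\<in>I" "i\<noteq>j"
  shows "measure lebesgue (A i \<inter> A j) = 0"
proof -
  define R where "R = I - {i, j}"
  have I: "I = insert i (insert j R)" using ij by (auto simp: R_def)
  have finR: "finite R" using fin by (simp add: R_def)
  have nR: "i \<notin> R" "j \<notin> R" by (auto simp: R_def)
  have U: "(\<Union>i\<in>I. A i) = (A i \<union> A j) \<union> (\<Union>k\<in>R. A k)" using I by auto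
  have "measure lebesgue (\<Union>i\<in>I. A i) \<le> measure lebesgue (A i \<union> A j) + measure lebesgue (\<Union>k\<in>R. A k)"
    unfolding U
    by (intro measure_Un_le) (use meas ij finR in \<open>auto simp: R_def intro!: sets.finite_UN\<close>)
  also have "measure lebesgue (\<Union>k\<in>R. A k) \<le> (\<Sum>k\<in>R. measure lebesgue (A k))"
    by (intro measure_UNION_le finR) (use meas in \<open>auto simp: R_def\<close>)
  also have "measure lebesgue (A i \<union> A j) = measure lebesgue (A i) + measure lebesgue (A j) - measure lebesgue (A i \<inter> A j)"
    using meas ij by (intro measure_Un3) auto
  finally have "measure lebesgue (\<Union>i\<in>I. A i) \<le> measure lebesgue (A i) + measure lebesgue (A j) - measure lebesgue (A i \<inter> A j) + (\<Sum>k\<in>R. measure lebesgue (A k))"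
    by simp
  moreover have "(\<Sum>i\<in>I. measure lebesgue (A i)) = measure lebesgue (A i) + measure lebesgue (A j) + (\<Sum>k\<in>R. measure lebesgue (A k))"
    unfolding I using finR nR ij by simp
  ultimately have "measure lebesgue (A i \<inter> A j) \<le> 0" using eq by linarith
  then show ?thesis by (simp add: measure_le_0_iff)
qed

lemma box_partition_mean:
  fixes I :: "'i set" and lo hi :: "'i \<Rightarrow> real^'n::finite" and N :: nat
  assumes fin: "finite I" and cardI: "card I = N" and Npos: "N > 0"
    and nd: "\<And>i k. lo i $ k < hi i $ k"
    and bnd: "\<And>i k. i \<in> I \<Longrightarrow> 0 \<le> lo i $ k \<and> hi i $ k \<le> 1"
    and vol: "\<And>i. i \<in> I \<Longrightarrow> (\<Prod>k\<in>UNIV. hi i $ k - lo i $ k) = 1 / real N"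
    and cover: "(\<Union>i\<in>I. cbox (lo i) (hi i)) = cbox 0 1"
  shows "is_partition I (\<lambda>i. cbox (lo i) (hi i)) (cbox 0 1)"
    "is_equivolume I (\<lambda>i. cbox (lo i) (hi i))"
    "is_convex_partition I (\<lambda>i. cbox (lo i) (hi i))"
    "mean_L2_disc_sq I (\<lambda>i. cbox (lo i) (hi i)) =
       (\<integral>x. (\<Prod>k\<in>UNIV. x$k) \<partial>lebesgue_on (cbox 0 (1::real^'n))) / real N
       - (\<Sum>i\<in>I. \<Prod>k\<in>UNIV. 1 - lo i $ k - 2 * (hi i $ k - lo i $ k) / 3) / (real N)\<^sup>2"
proof -
  define \<Omega> where "\<Omega> = (\<lambda>i. cbox (lo i) (hi i))"
  have ne: "I \<noteq> {}" using cardI Npos by auto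
  have mOm: "measure lebesgue (\<Omega> i) = (\<Prod>k\<in>UNIV. hi i $ k - lo i $ k)" for i
    using nd by (simp add: \<Omega>_def measure_lebesgue_cbox_cart less_imp_le)
  have mpos: "measure lebesgue (\<Omega> i) > 0" for i
    unfolding mOm using nd by (intro prod_pos) (simp add: less_imp_le)
  have emOm: "emeasure lebesgue (\<Omega> i) = ennreal (measure lebesgue (\<Omega> i))" for i
    by (simp add: \<Omega>_def emeasure_eq_measure2)
  have lm: "\<Omega> i \<in> lmeasurable" for i by (simp add: \<Omega>_def)
  have mI: "measure lebesgue (\<Omega> i) = 1 / real N" if "i \<in> I" for i
    using vol[OF that] mOm by simp
  have m01: "measure lebesgue (cbox 0 (1::real^'n)) = 1"
    by (simp add: measure_lebesgue_cbox_cart)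
  have sumeq: "(\<Sum>i\<in>I. measure lebesgue (\<Omega> i)) \<le> measure lebesgue (\<Union>i\<in>I. \<Omega> i)"
  proof -
    have "(\<Sum>i\<in>I. measure lebesgue (\<Omega> i)) = (\<Sum>i\<in>I. 1 / real N)"
      by (rule sum.cong) (simp_all add: mI)
    also have "\<dots> = 1" using Npos by (simp add: cardI)
    also have "1 = measure lebesgue (\<Union>i\<in>I. \<Omega> i)"
      unfolding \<Omega>_def cover m01 ..
    finally show ?thesis by simp
  qed
  have negl: "negligible (\<Omega> i \<inter> \<Omega> j)" if "i \<in> I" "j \<in> I" "i \<noteq> j" for i j
  proof -
    have "\<Omega> i \<inter> \<Omega> j \<in> lmeasurable" using lm by (intro fmeasurable_Int_fmeasurable) auto
    then show ?thesis
      by (subst negligible_iff_measure0) (auto intro: null_inter_from_sum[OF fin lm sumeq that])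
  qed
  have disj: "interior (\<Omega> i) \<inter> interior (\<Omega> j) = {}" if "i \<in> I" "j \<in> I" "i \<noteq> j" for i j
  proof -
    have "negligible (interior (\<Omega> i) \<inter> interior (\<Omega> j))"
      by (rule negligible_subset[OF negl[OF that]]) (auto dest: interior_subset[THEN subsetD])
    then show ?thesis using open_not_negligible[of "interior (\<Omega> i) \<inter> interior (\<Omega> j)"] by auto
  qed
  show part: "is_partition I (\<lambda>i. cbox (lo i) (hi i)) (cbox 0 1)"
  proof -
    have empos: "emeasure lebesgue (\<Omega> i) > 0" for i
      unfolding emOm using mpos[of i] by simp
    have "\<Omega> i \<in> sets lebesgue" for i using lm by auto
    then show ?thesis
      unfolding is_partition_def \<Omega>_def[symmetric]
      using fin ne cover disj empos by (simp add: \<Omega>_def)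
  qed
  show "is_equivolume I (\<lambda>i. cbox (lo i) (hi i))"
    unfolding is_equivolume_def \<Omega>_def[symmetric] by (simp add: mI)
  show "is_convex_partition I (\<lambda>i. cbox (lo i) (hi i))"
    by (simp add: is_convex_partition_def)
  have pf: "pfun \<Omega> i x = (\<Prod>k\<in>UNIV. phi (lo i $ k) (hi i $ k) (x$k))" if "i \<in> I" for i x
    unfolding pfun_def \<Omega>_def using bnd[OF that] nd by (intro pfun_box_eq) auto
  have sumP: "(\<Sum>i\<in>I. pfun \<Omega> i x) = real (card I) * (\<Prod>k\<in>UNIV. x$k)" if x: "x \<in> cbox 0 1" for x
  proof -
    have "(\<Sum>i\<in>I. pfun \<Omega> i x) = (\<Sum>i\<in>I. measure lebesgue (\<Omega> i \<inter> cbox 0 x)) * real N"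
      using Npos by (simp add: pfun_def mI sum_distrib_right)
    also have "(\<Sum>i\<in>I. measure lebesgue (\<Omega> i \<inter> cbox 0 x)) = measure lebesgue ((\<Union>i\<in>I. \<Omega> i) \<inter> cbox 0 x)"
      using fin lm disj by (intro partition_measure_sum) (auto simp: \<Omega>_def)
    also have "(\<Union>i\<in>I. \<Omega> i) \<inter> cbox 0 x = cbox 0 x"
      using cover x by (auto simp: \<Omega>_def mem_box_cart) (meson order_trans)
    also have "measure lebesgue (cbox 0 x) = (\<Prod>k\<in>UNIV. x$k)"
      using x by (simp add: measure_lebesgue_cbox_cart mem_box_cart)
    finally show ?thesis by (simp add: cardI)
  qed
  have meq: "mean_L2_disc_sq I \<Omega> = (\<integral>x. (\<Sum>i\<in>I. pfun \<Omega> i x * (1 - pfun \<Omega> i x)) / (real (card I))\<^sup>2 \<partial>lebesgue_on (cbox 0 1))"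
  proof (rule mean_formula[OF fin ne])
    show "\<Omega> i \<in> sets lebesgue" for i using lm by auto
    show "emeasure lebesgue (\<Omega> i) \<noteq> 0" for i using mpos[of i] unfolding emOm by simp
    show "emeasure lebesgue (\<Omega> i) \<noteq> \<infinity>" for i unfolding emOm by simp
  qed (rule sumP)
  define L where "L = lebesgue_on (cbox 0 (1::real^'n))"
  have finL: "finite_measure L"
  proof (rule finite_measureI)
    have "emeasure L (space L) = emeasure lebesgue (cbox 0 (1::real^'n))"
      unfolding L_def by (simp add: emeasure_restrict_space)
    also have "\<dots> < \<infinity>" using emeasure_lborel_cbox_finite[of "0::real^'n" 1] by (simp add: measure_completion emeasure_completion)
    finally show "emeasure L (space L) \<noteq> \<infinity>" by simp
  qed
  interpret L: finite_measure L by (rule finL)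
  have spL: "space L = cbox 0 1" by (simp add: L_def)
  define g where "g i x = (\<Prod>k\<in>UNIV. phi (lo i $ k) (hi i $ k) (x$k))\<^sup>2" for i x
  have intP: "integrable L (\<lambda>x. \<Prod>k\<in>UNIV. x$k)"
  proof (rule L.integrable_const_bound[where B=1])
    show "AE x in L. norm (\<Prod>k\<in>UNIV. x$k) \<le> 1"
    proof (rule AE_I2)
      fix x assume "x \<in> space L"
      then have "x \<in> cbox 0 1" by (simp add: spL)
      from prod_vec_01[OF this] show "norm (\<Prod>k\<in>UNIV. x$k) \<le> 1" by simp
    qed
    show "(\<lambda>x. \<Prod>k\<in>UNIV. x$k) \<in> borel_measurable L"
      unfolding L_def by (intro measurable_restrict_space1) measurable
  qed
  have g01: "0 \<le> g i x \<and> g i x \<le> 1" for i x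
  proof -
    have "0 \<le> (\<Prod>k\<in>UNIV. phi (lo i $ k) (hi i $ k) (x$k))" "(\<Prod>k\<in>UNIV. phi (lo i $ k) (hi i $ k) (x$k)) \<le> 1"
      using nd by (auto intro!: prod_nonneg prod_le_1 phi_nonneg phi_le1)
    then show ?thesis unfolding g_def by (simp add: power_le_one)
  qed
  have intg: "integrable L (g i)" for i
  proof (rule L.integrable_const_bound[where B=1])
    show "AE x in L. norm (g i x) \<le> 1"
      by (rule AE_I2) (use g01 in \<open>auto\<close>)
    show "g i \<in> borel_measurable L"
      unfolding g_def[abs_def] L_def using pfun_prod_meas by measurable
  qed
  have gint: "(\<integral>x. g i x \<partial>L) = (\<Prod>k\<in>UNIV. 1 - lo i $ k - 2 * (hi i $ k - lo i $ k) / 3)" if "i \<in> I" for i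
    unfolding g_def L_def using bnd[OF that] nd by (intro integral_pfun_sq_box) (auto simp: less_imp_le)
  have "mean_L2_disc_sq I \<Omega> = (\<integral>x. (real N * (\<Prod>k\<in>UNIV. x$k) - (\<Sum>i\<in>I. g i x)) / (real N)\<^sup>2 \<partial>L)"
    unfolding meq L_def[symmetric]
  proof (rule Bochner_Integration.integral_cong[OF refl])
    fix x assume "x \<in> space L"
    then have x: "x \<in> cbox 0 1" by (simp add: spL)
    have "(\<Sum>i\<in>I. pfun \<Omega> i x * (1 - pfun \<Omega> i x)) = (\<Sum>i\<in>I. pfun \<Omega> i x) - (\<Sum>i\<in>I. g i x)"
      by (simp add: sum_subtractf[symmetric] algebra_simps g_def pf power2_eq_square)
    also have "\<dots> = real N * (\<Prod>k\<in>UNIV. x$k) - (\<Sum>i\<in>I. g i x)"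
      using sumP[OF x] by (simp add: cardI)
    finally show "(\<Sum>i\<in>I. pfun \<Omega> i x * (1 - pfun \<Omega> i x)) / (real (card I))\<^sup>2 = (real N * (\<Prod>k\<in>UNIV. x$k) - (\<Sum>i\<in>I. g i x)) / (real N)\<^sup>2"
      by (simp add: cardI)
  qed
  also have "\<dots> = (real N * (\<integral>x. (\<Prod>k\<in>UNIV. x$k) \<partial>L) - (\<Sum>i\<in>I. \<integral>x. g i x \<partial>L)) / (real N)\<^sup>2"
    using intP intg
    by (simp add: Bochner_Integration.integral_diff Bochner_Integration.integral_sum Bochner_Integration.integrable_sum)
  also have "(\<Sum>i\<in>I. \<integral>x. g i x \<partial>L) = (\<Sum>i\<in>I. \<Prod>k\<in>UNIV. 1 - lo i $ k - 2 * (hi i $ k - lo i $ k) / 3)"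
    by (rule sum.cong) (simp_all add: gint)
  finally show "mean_L2_disc_sq I (\<lambda>i. cbox (lo i) (hi i)) =
       (\<integral>x. (\<Prod>k\<in>UNIV. x$k) \<partial>lebesgue_on (cbox 0 (1::real^'n))) / real N
       - (\<Sum>i\<in>I. \<Prod>k\<in>UNIV. 1 - lo i $ k - 2 * (hi i $ k - lo i $ k) / 3) / (real N)\<^sup>2"
    using Npos by (simp add: \<Omega>_def L_def power2_eq_square diff_divide_distrib)
qed

definition jlo :: "nat \<Rightarrow> ('n::finite \<Rightarrow> nat) \<Rightarrow> real^'n" where
  "jlo m j = (\<chi> k. (real (j k) - 1) / real m)"
definition jhi :: "nat \<Rightarrow> ('n::finite \<Rightarrow> nat) \<Rightarrow> real^'n" where
  "jhi m j = (\<chi> k. real (j k) / real m)"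

lemma jittered_eq: "jittered m = (\<lambda>j. cbox (jlo m j) (jhi m j))"
  by (simp add: fun_eq_iff jittered_def jlo_def jhi_def)

lemma jlo_nth[simp]: "jlo m j $ k = (real (j k) - 1) / real m" by (simp add: jlo_def)
lemma jhi_nth[simp]: "jhi m j $ k = real (j k) / real m" by (simp add: jhi_def)

lemma card_jitter_index: "card (jitter_index m :: ('n::finite \<Rightarrow> nat) set) = m ^ CARD('n)"
  by (simp add: jitter_index_def card_PiE)

lemma finite_jitter_index: "finite (jitter_index m :: ('n::finite \<Rightarrow> nat) set)"
  by (simp add: jitter_index_def finite_PiE)

lemma mem_jitter_index: "j \<in> jitter_index m \<longleftrightarrow> (\<forall>k. 1 \<le> j k \<and> j k \<le> m)"
  by (auto simp: jitter_index_def PiE_def extensional_def)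

lemma j_nd: "m > 0 \<Longrightarrow> jlo m j $ k < jhi m j $ k"
  by (simp add: divide_strict_right_mono)

lemma j_bnd: "j \<in> jitter_index m \<Longrightarrow> m > 0 \<Longrightarrow> 0 \<le> jlo m j $ k \<and> jhi m j $ k \<le> 1"
  by (auto simp: mem_jitter_index)

lemma prod_const_UNIV: "(\<Prod>k\<in>(UNIV::'n::finite set). c) = c ^ CARD('n)"
  by simp

lemma j_vol: fixes j :: "'n::finite \<Rightarrow> nat" shows "m > 0 \<Longrightarrow> (\<Prod>k\<in>UNIV. jhi m j $ k - jlo m j $ k) = 1 / real (m ^ CARD('n::finite))"
  by (simp add: diff_divide_distrib power_one_over)

lemma j_cover:
  assumes m: "m > 0"
  shows "(\<Union>j\<in>jitter_index m. cbox (jlo m j) (jhi m j)) = cbox 0 (1::real^'n::finite)"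
proof
  show "(\<Union>j\<in>jitter_index m. cbox (jlo m j) (jhi m j)) \<subseteq> cbox 0 1"
  proof
    fix x assume "x \<in> (\<Union>j\<in>jitter_index m. cbox (jlo m j) (jhi m j))"
    then obtain j where j: "j \<in> jitter_index m" and xj: "x \<in> cbox (jlo m j) (jhi m j)" by blast
    have "0 \<le> x $ k \<and> x $ k \<le> 1" for k
      using j_bnd[OF j m, of k] xj unfolding mem_box_cart by (meson order_trans)
    then show "x \<in> cbox 0 1" by (simp add: mem_box_cart)
  qed
  show "cbox 0 (1::real^'n) \<subseteq> (\<Union>j\<in>jitter_index m. cbox (jlo m j) (jhi m j))"
  proof
    fix x :: "real^'n" assume x: "x \<in> cbox 0 1"
    define j where "j k = max 1 (nat \<lceil>real m * x $ k\<rceil>)" for k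
    have jk: "1 \<le> j k \<and> j k \<le> m" for k
    proof -
      have "x $ k \<le> 1" using x by (simp add: mem_box_cart)
      then have "real m * x $ k \<le> real m" using m by (simp add: mult_left_le)
      then have c: "\<lceil>real m * x $ k\<rceil> \<le> int m" by (simp add: ceiling_le_iff)
      then have "nat \<lceil>real m * x $ k\<rceil> \<le> m" by (simp add: nat_le_iff)
      then show ?thesis unfolding j_def using m by simp
    qed
    have lo: "(real (j k) - 1) / real m \<le> x $ k" for k
    proof -
      have "real (j k) - 1 \<le> real m * x $ k"
      proof (cases "\<lceil>real m * x $ k\<rceil> \<le> 1")
        case True
        then have "j k = 1" by (auto simp: j_def)
        moreover have "0 \<le> x $ k" using x by (simp add: mem_box_cart)
        ultimately show ?thesis using m by simp
      next
        case False
        then have "real (j k) = of_int \<lceil>real m * x $ k\<rceil>" by (auto simp: j_def)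
        then show ?thesis by linarith
      qed
      then show ?thesis using m by (simp add: divide_le_eq mult.commute)
    qed
    have hi: "x $ k \<le> real (j k) / real m" for k
    proof -
      have "real m * x $ k \<le> real (j k)"
        by (auto simp: j_def) linarith
      then show ?thesis using m by (simp add: le_divide_eq mult.commute)
    qed
    have "j \<in> jitter_index m" using jk by (simp add: mem_jitter_index)
    moreover have "x \<in> cbox (jlo m j) (jhi m j)" using lo hi by (simp add: mem_box_cart)
    ultimately show "x \<in> (\<Union>j\<in>jitter_index m. cbox (jlo m j) (jhi m j))" by blast
  qed
qed

definition jj :: "'n \<Rightarrow> 'n \<Rightarrow> nat \<Rightarrow> nat \<Rightarrow> ('n \<Rightarrow> nat)" where
  "jj k1 k2 a b = (\<lambda>k. if k = k1 then a else if k = k2 then b else 1)"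

definition mk :: "'n::finite \<Rightarrow> 'n \<Rightarrow> real \<Rightarrow> real \<Rightarrow> real \<Rightarrow> real^'n" where
  "mk k1 k2 a b c = (\<chi> k. if k = k1 then a else if k = k2 then b else c)"

lemma mk_nth[simp]: "mk k1 k2 a b c $ k = (if k = k1 then a else if k = k2 then b else c)"
  by (simp add: mk_def)

lemma jj_eq_iff:
  assumes "k1 \<noteq> k2"
  shows "jj k1 k2 a b = jj k1 k2 a' b' \<longleftrightarrow> a = a' \<and> b = b'"
proof
  assume "jj k1 k2 a b = jj k1 k2 a' b'"
  then have "jj k1 k2 a b k1 = jj k1 k2 a' b' k1" "jj k1 k2 a b k2 = jj k1 k2 a' b' k2" by simp_all
  then show "a = a' \<and> b = b'" using assms by (simp add: jj_def)
qed simp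

lemma prod_mk:
  fixes F :: "real \<Rightarrow> real \<Rightarrow> real" and k1 k2 :: "'n::finite"
  assumes k12: "k1 \<noteq> k2"
  shows "(\<Prod>k\<in>UNIV. F (mk k1 k2 a b c $ k) (mk k1 k2 a' b' c' $ k))
       = F a a' * F b b' * F c c' ^ (CARD('n) - 2)"
proof -
  have U: "(UNIV::'n set) = insert k1 (insert k2 (UNIV - {k1, k2}))" by auto
  have c: "card (UNIV - {k1, k2} :: 'n set) = CARD('n) - 2"
    using k12 by (simp add: card_Diff_subset)
  have "(\<Prod>k\<in>UNIV. F (mk k1 k2 a b c $ k) (mk k1 k2 a' b' c' $ k))
      = F a a' * (F b b' * (\<Prod>k\<in>UNIV - {k1, k2}. F (mk k1 k2 a b c $ k) (mk k1 k2 a' b' c' $ k)))"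
    using k12 by (subst U) (simp add: prod.insert)
  also have "(\<Prod>k\<in>UNIV - {k1, k2}. F (mk k1 k2 a b c $ k) (mk k1 k2 a' b' c' $ k)) = (\<Prod>k\<in>UNIV - {k1, k2}. F c c')"
    by (rule prod.cong) auto
  also have "\<dots> = F c c' ^ (CARD('n) - 2)" using c by simp
  finally show ?thesis by (simp add: mult.assoc)
qed

definition nlo :: "nat \<Rightarrow> 'n::finite \<Rightarrow> 'n \<Rightarrow> ('n \<Rightarrow> nat) \<Rightarrow> real^'n" where
  "nlo m k1 k2 j =
    (if j = jj k1 k2 1 (m-1) then mk k1 k2 0 (1 - 2/m) 0
     else if j = jj k1 k2 1 m then mk k1 k2 0 (1 - 5/(4*m)) 0
     else if j = jj k1 k2 2 m then mk k1 k2 0 (1 - 1/(2*m)) 0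
     else if j = jj k1 k2 2 (m-1) then mk k1 k2 (4/(3*m)) (1 - 2/m) 0
     else jlo m j)"

definition nhi :: "nat \<Rightarrow> 'n::finite \<Rightarrow> 'n \<Rightarrow> ('n \<Rightarrow> nat) \<Rightarrow> real^'n" where
  "nhi m k1 k2 j =
    (if j = jj k1 k2 1 (m-1) then mk k1 k2 (4/(3*m)) (1 - 5/(4*m)) (1/m)
     else if j = jj k1 k2 1 m then mk k1 k2 (4/(3*m)) (1 - 1/(2*m)) (1/m)
     else if j = jj k1 k2 2 m then mk k1 k2 (2/m) 1 (1/m)
     else if j = jj k1 k2 2 (m-1) then mk k1 k2 (2/m) (1 - 1/(2*m)) (1/m)
     else jhi m j)"

definition B4 :: "nat \<Rightarrow> 'n \<Rightarrow> 'n \<Rightarrow> ('n \<Rightarrow> nat) set" where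
  "B4 m k1 k2 = {jj k1 k2 1 (m-1), jj k1 k2 1 m, jj k1 k2 2 m, jj k1 k2 2 (m-1)}"

context
  fixes m :: nat and k1 k2 :: "'n::finite"
  assumes m2: "m \<ge> 2" and k12: "k1 \<noteq> k2"
begin

lemma jj_ne:
  "jj k1 k2 1 m \<noteq> jj k1 k2 1 (m-1)" "jj k1 k2 2 m \<noteq> jj k1 k2 1 (m-1)" "jj k1 k2 2 (m-1) \<noteq> jj k1 k2 1 (m-1)"
  "jj k1 k2 2 m \<noteq> jj k1 k2 1 m" "jj k1 k2 2 (m-1) \<noteq> jj k1 k2 1 m" "jj k1 k2 2 (m-1) \<noteq> jj k1 k2 2 m"
  using m2 by (simp_all add: jj_eq_iff[OF k12])

lemma nlo_simps:
  "nlo m k1 k2 (jj k1 k2 1 (m-1)) = mk k1 k2 0 (1 - 2/m) 0"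
  "nlo m k1 k2 (jj k1 k2 1 m) = mk k1 k2 0 (1 - 5/(4*m)) 0"
  "nlo m k1 k2 (jj k1 k2 2 m) = mk k1 k2 0 (1 - 1/(2*m)) 0"
  "nlo m k1 k2 (jj k1 k2 2 (m-1)) = mk k1 k2 (4/(3*m)) (1 - 2/m) 0"
  "j \<notin> B4 m k1 k2 \<Longrightarrow> nlo m k1 k2 j = jlo m j"
  using jj_ne by (auto simp: nlo_def B4_def)

lemma nhi_simps:
  "nhi m k1 k2 (jj k1 k2 1 (m-1)) = mk k1 k2 (4/(3*m)) (1 - 5/(4*m)) (1/m)"
  "nhi m k1 k2 (jj k1 k2 1 m) = mk k1 k2 (4/(3*m)) (1 - 1/(2*m)) (1/m)"
  "nhi m k1 k2 (jj k1 k2 2 m) = mk k1 k2 (2/m) 1 (1/m)"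
  "nhi m k1 k2 (jj k1 k2 2 (m-1)) = mk k1 k2 (2/m) (1 - 1/(2*m)) (1/m)"
  "j \<notin> B4 m k1 k2 \<Longrightarrow> nhi m k1 k2 j = jhi m j"
  using jj_ne by (auto simp: nhi_def B4_def)

lemma B4_sub: "B4 m k1 k2 \<subseteq> jitter_index m"
  using m2 by (auto simp: B4_def mem_jitter_index jj_def)

lemma jlo_jj: "jlo m (jj k1 k2 a b) = mk k1 k2 ((real a - 1) / m) ((real b - 1) / m) 0"
  by (simp add: vec_eq_iff jj_def)

lemma jhi_jj: "jhi m (jj k1 k2 a b) = mk k1 k2 (real a / m) (real b / m) (1 / m)"
  by (simp add: vec_eq_iff jj_def)

end

context
  fixes m :: nat and k1 k2 :: "'n::finite"
  assumes m2: "m \<ge> 2" and k12: "k1 \<noteq> k2"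
begin

lemma mpos: "real m > 0" using m2 by simp

lemma B4_cases:
  assumes "j \<in> B4 m k1 k2"
  obtains "j = jj k1 k2 1 (m-1)" | "j = jj k1 k2 1 m" | "j = jj k1 k2 2 m" | "j = jj k1 k2 2 (m-1)"
  using assms by (auto simp: B4_def)

lemma rm1: "real (m - 1) = real m - 1" using m2 by (simp add: of_nat_diff)

lemma n_nd: "nlo m k1 k2 j $ k < nhi m k1 k2 j $ k"
proof (cases "j \<in> B4 m k1 k2")
  case True
  then show ?thesis
  proof (cases rule: B4_cases)
    case 1 then show ?thesis unfolding 1 using m2 k12 mpos by (simp only: nlo_simps[OF m2 k12] nhi_simps[OF m2 k12]) (auto simp: field_simps)
  next
    case 2 then show ?thesis unfolding 2 using m2 k12 mpos by (simp only: nlo_simps[OF m2 k12] nhi_simps[OF m2 k12]) (auto simp: field_simps)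
  next
    case 3 then show ?thesis unfolding 3 using m2 k12 mpos by (simp only: nlo_simps[OF m2 k12] nhi_simps[OF m2 k12]) (auto simp: field_simps)
  next
    case 4 then show ?thesis unfolding 4 using m2 k12 mpos by (simp only: nlo_simps[OF m2 k12] nhi_simps[OF m2 k12]) (auto simp: field_simps)
  qed
next
  case False
  show ?thesis unfolding nlo_simps(5)[OF m2 k12 False] nhi_simps(5)[OF m2 k12 False]
    using m2 by (intro j_nd) simp
qed

lemma n_bnd: "j \<in> jitter_index m \<Longrightarrow> 0 \<le> nlo m k1 k2 j $ k \<and> nhi m k1 k2 j $ k \<le> 1"
proof (cases "j \<in> B4 m k1 k2")
  case True
  then show ?thesis
  proof (cases rule: B4_cases)
    case 1 then show ?thesis unfolding 1 using m2 k12 mpos by (simp only: nlo_simps[OF m2 k12] nhi_simps[OF m2 k12]) (auto simp: field_simps)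
  next
    case 2 then show ?thesis unfolding 2 using m2 k12 mpos by (simp only: nlo_simps[OF m2 k12] nhi_simps[OF m2 k12]) (auto simp: field_simps)
  next
    case 3 then show ?thesis unfolding 3 using m2 k12 mpos by (simp only: nlo_simps[OF m2 k12] nhi_simps[OF m2 k12]) (auto simp: field_simps)
  next
    case 4 then show ?thesis unfolding 4 using m2 k12 mpos by (simp only: nlo_simps[OF m2 k12] nhi_simps[OF m2 k12]) (auto simp: field_simps)
  qed
next
  case False
  assume "j \<in> jitter_index m"
  then show ?thesis unfolding nlo_simps(5)[OF m2 k12 False] nhi_simps(5)[OF m2 k12 False]
    using m2 by (intro j_bnd) auto
qed

lemma card_ge2: "CARD('n) \<ge> 2"
proof -
  have "card {k1, k2} \<le> CARD('n)" by (rule card_mono) auto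
  then show ?thesis using k12 by simp
qed

lemma pow_split: "(c::real) ^ 2 * c ^ (CARD('n) - 2) = c ^ CARD('n)"
proof -
  have "2 + (CARD('n) - 2) = CARD('n)" using card_ge2 by simp
  then show ?thesis by (metis power_add)
qed

lemma n_vol: "(\<Prod>k\<in>UNIV. nhi m k1 k2 j $ k - nlo m k1 k2 j $ k) = 1 / real (m ^ CARD('n))"
proof (cases "j \<in> B4 m k1 k2")
  case True
  note pm = prod_mk[OF k12, where F = "\<lambda>x y. y - x"]
  have e: "1 / real (m ^ CARD('n)) = (1 / real m) ^ 2 * (1 / real m) ^ (CARD('n) - 2)"
    by (simp add: pow_split power_one_over)
  from True show ?thesis
  proof (cases rule: B4_cases)
    case 1 then show ?thesis unfolding e 1 using mpos
      by (simp only: nlo_simps[OF m2 k12] nhi_simps[OF m2 k12] pm) (simp add: field_simps power2_eq_square)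
  next
    case 2 then show ?thesis unfolding e 2 using mpos
      by (simp only: nlo_simps[OF m2 k12] nhi_simps[OF m2 k12] pm) (simp add: field_simps power2_eq_square)
  next
    case 3 then show ?thesis unfolding e 3 using mpos
      by (simp only: nlo_simps[OF m2 k12] nhi_simps[OF m2 k12] pm) (simp add: field_simps power2_eq_square)
  next
    case 4 then show ?thesis unfolding e 4 using mpos
      by (simp only: nlo_simps[OF m2 k12] nhi_simps[OF m2 k12] pm) (simp add: field_simps power2_eq_square)
  qed
next
  case False
  show ?thesis unfolding nlo_simps(5)[OF m2 k12 False] nhi_simps(5)[OF m2 k12 False]
    using m2 by (intro j_vol) simp
qed

end

definition G :: "real \<Rightarrow> real \<Rightarrow> real" where "G x y = 1 - x - 2 * (y - x) / 3"

lemma Q_val: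
  fixes m :: real assumes m: "m \<ge> 2"
  shows "(G 0 (4/(3*m)) * G (1-2/m) (1-5/(4*m)) + G 0 (4/(3*m)) * G (1-5/(4*m)) (1-1/(2*m))
        + G 0 (2/m) * G (1-1/(2*m)) 1 + G (4/(3*m)) (2/m) * G (1-2/m) (1-1/(2*m)))
       - (G 0 (1/m) * G ((m-2)/m) ((m-1)/m) + G 0 (1/m) * G ((m-1)/m) (m/m)
        + G (1/m) (2/m) * G ((m-2)/m) ((m-1)/m) + G (1/m) (2/m) * G ((m-1)/m) (m/m))
       = (3*m - 4) / (36 * m^2)"
  using m by (simp add: G_def field_simps power2_eq_square)

definition boxval :: "real^'n::finite \<Rightarrow> real^'n \<Rightarrow> real" where
  "boxval lo hi = (\<Prod>k\<in>UNIV. G (lo$k) (hi$k))"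

context
  fixes m :: nat and k1 k2 :: "'n::finite"
  assumes m2: "m \<ge> 2" and k12: "k1 \<noteq> k2"
begin

lemma mem_mk:
  "x \<in> cbox (mk k1 k2 a b c) (mk k1 k2 a' b' c') \<longleftrightarrow>
     a \<le> x$k1 \<and> x$k1 \<le> a' \<and> b \<le> x$k2 \<and> x$k2 \<le> b' \<and> (\<forall>k. k \<noteq> k1 \<longrightarrow> k \<noteq> k2 \<longrightarrow> c \<le> x$k \<and> x$k \<le> c')"
proof -
  have "x \<in> cbox (mk k1 k2 a b c) (mk k1 k2 a' b' c') \<longleftrightarrow>
    (\<forall>k. (if k = k1 then a else if k = k2 then b else c) \<le> x$k \<and> x$k \<le> (if k = k1 then a' else if k = k2 then b' else c'))"
    unfolding mem_box_cart by simp
  also have "\<dots> \<longleftrightarrow> a \<le> x$k1 \<and> x$k1 \<le> a' \<and> b \<le> x$k2 \<and> x$k2 \<le> b' \<and> (\<forall>k. k \<noteq> k1 \<longrightarrow> k \<noteq> k2 \<longrightarrow> c \<le> x$k \<and> x$k \<le> c')"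
  proof
    assume H: "\<forall>k. (if k = k1 then a else if k = k2 then b else c) \<le> x$k \<and> x$k \<le> (if k = k1 then a' else if k = k2 then b' else c')"
    show "a \<le> x$k1 \<and> x$k1 \<le> a' \<and> b \<le> x$k2 \<and> x$k2 \<le> b' \<and> (\<forall>k. k \<noteq> k1 \<longrightarrow> k \<noteq> k2 \<longrightarrow> c \<le> x$k \<and> x$k \<le> c')"
    proof -
      have "c \<le> x$k \<and> x$k \<le> c'" if "k \<noteq> k1" "k \<noteq> k2" for k
        using H[rule_format, of k] that by simp
      then show ?thesis using H[rule_format, of k1] H[rule_format, of k2] k12 by auto
    qed
  next
    assume H: "a \<le> x$k1 \<and> x$k1 \<le> a' \<and> b \<le> x$k2 \<and> x$k2 \<le> b' \<and> (\<forall>k. k \<noteq> k1 \<longrightarrow> k \<noteq> k2 \<longrightarrow> c \<le> x$k \<and> x$k \<le> c')"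
    show "\<forall>k. (if k = k1 then a else if k = k2 then b else c) \<le> x$k \<and> x$k \<le> (if k = k1 then a' else if k = k2 then b' else c')"
      using H by auto
  qed
  finally show ?thesis .
qed

lemma block_bounds:
  assumes j: "j \<in> B4 m k1 k2" and x: "x \<in> cbox (jlo m j) (jhi m j)"
  shows "0 \<le> x$k1 \<and> x$k1 \<le> 2/m \<and> 1 - 2/m \<le> x$k2 \<and> x$k2 \<le> 1 \<and> (\<forall>k. k \<noteq> k1 \<longrightarrow> k \<noteq> k2 \<longrightarrow> 0 \<le> x$k \<and> x$k \<le> 1/m)"
proof -
  obtain a b where ab: "a \<in> {1,2}" "b \<in> {m-1, m}" and jab: "j = jj k1 k2 a b"
    using j by (auto simp: B4_def)
  have mp: "real m > 0" using m2 by simp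
  have ha: "0 \<le> (real a - 1)/m \<and> real a / m \<le> 2/m" using ab(1) mp by (auto simp: field_simps)
  have hb: "1 - 2/m \<le> (real b - 1)/m \<and> real b / m \<le> 1" using ab(2) mp m2 by (auto simp: field_simps rm1[OF m2 k12])
  have xx: "(real a - 1) / m \<le> x$k1 \<and> x$k1 \<le> real a / m \<and> (real b - 1) / m \<le> x$k2 \<and> x$k2 \<le> real b / m \<and>
     (\<forall>k. k \<noteq> k1 \<longrightarrow> k \<noteq> k2 \<longrightarrow> 0 \<le> x$k \<and> x$k \<le> 1 / m)"
    using x unfolding jab jlo_jj[OF m2 k12] jhi_jj[OF m2 k12] mem_mk by simp
  show ?thesis using ha hb xx by (meson order_trans)
qed

lemma n_cover: "(\<Union>j\<in>jitter_index m. cbox (nlo m k1 k2 j) (nhi m k1 k2 j)) = cbox 0 (1::real^'n)"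
proof
  show "(\<Union>j\<in>jitter_index m. cbox (nlo m k1 k2 j) (nhi m k1 k2 j)) \<subseteq> cbox 0 1"
  proof
    fix x assume "x \<in> (\<Union>j\<in>jitter_index m. cbox (nlo m k1 k2 j) (nhi m k1 k2 j))"
    then obtain j where j: "j \<in> jitter_index m" and xj: "x \<in> cbox (nlo m k1 k2 j) (nhi m k1 k2 j)" by blast
    have "0 \<le> x $ k \<and> x $ k \<le> 1" for k
      using n_bnd[OF m2 k12 j, of k] xj unfolding mem_box_cart by (meson order_trans)
    then show "x \<in> cbox 0 1" by (simp add: mem_box_cart)
  qed
  show "cbox 0 (1::real^'n) \<subseteq> (\<Union>j\<in>jitter_index m. cbox (nlo m k1 k2 j) (nhi m k1 k2 j))"
  proof
    fix x :: "real^'n" assume x: "x \<in> cbox 0 1"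
    have jc: "(\<Union>j\<in>(jitter_index m :: ('n \<Rightarrow> nat) set). cbox (jlo m j) (jhi m j)) = cbox 0 (1::real^'n)"
      using m2 by (intro j_cover) simp
    have "x \<in> (\<Union>j\<in>(jitter_index m :: ('n \<Rightarrow> nat) set). cbox (jlo m j) (jhi m j))"
      unfolding jc using x .
    then obtain j where j: "j \<in> jitter_index m" and xj: "x \<in> cbox (jlo m j) (jhi m j)" by blast
    show "x \<in> (\<Union>j\<in>jitter_index m. cbox (nlo m k1 k2 j) (nhi m k1 k2 j))"
    proof (cases "j \<in> B4 m k1 k2")
      case False
      then have "x \<in> cbox (nlo m k1 k2 j) (nhi m k1 k2 j)"
        using xj by (simp add: nlo_simps(5)[OF m2 k12 False] nhi_simps(5)[OF m2 k12 False])
      then show ?thesis using j by blast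
    next
      case True
      note bb = block_bounds[OF True xj]
      have mp: "real m > 0" using m2 by simp
      have inJ: "jj k1 k2 a b \<in> jitter_index m" if "jj k1 k2 a b \<in> B4 m k1 k2" for a b
        using B4_sub[OF m2 k12] that by blast
      have memB: "jj k1 k2 1 (m-1) \<in> B4 m k1 k2" "jj k1 k2 1 m \<in> B4 m k1 k2"
        "jj k1 k2 2 m \<in> B4 m k1 k2" "jj k1 k2 2 (m-1) \<in> B4 m k1 k2"
        by (simp_all add: B4_def)
      consider (c3) "1 - 1/(2*m) \<le> x$k2"
        | (c4) "x$k2 < 1 - 1/(2*m)" "4/(3*m) \<le> x$k1"
        | (c1) "x$k2 \<le> 1 - 5/(4*m)" "x$k1 < 4/(3*m)"
        | (c2) "1 - 5/(4*m) < x$k2" "x$k2 < 1 - 1/(2*m)" "x$k1 < 4/(3*m)"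
        by linarith
      then show ?thesis
      proof cases
        case c3
        have "x \<in> cbox (nlo m k1 k2 (jj k1 k2 2 m)) (nhi m k1 k2 (jj k1 k2 2 m))"
          unfolding nlo_simps(3)[OF m2 k12] nhi_simps(3)[OF m2 k12] mem_mk using bb c3 by simp
        then show ?thesis using inJ[OF memB(3)] by blast
      next
        case c4
        have "x \<in> cbox (nlo m k1 k2 (jj k1 k2 2 (m-1))) (nhi m k1 k2 (jj k1 k2 2 (m-1)))"
          unfolding nlo_simps(4)[OF m2 k12] nhi_simps(4)[OF m2 k12] mem_mk using bb c4 by simp
        then show ?thesis using inJ[OF memB(4)] by blast
      next
        case c1
        have "1 - 5/(4*m) \<le> 1 - 1/(2*m)" using mp by (simp add: field_simps)
        then have "x \<in> cbox (nlo m k1 k2 (jj k1 k2 1 (m-1))) (nhi m k1 k2 (jj k1 k2 1 (m-1)))"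
          unfolding nlo_simps(1)[OF m2 k12] nhi_simps(1)[OF m2 k12] mem_mk using bb c1 by simp
        then show ?thesis using inJ[OF memB(1)] by blast
      next
        case c2
        have "x \<in> cbox (nlo m k1 k2 (jj k1 k2 1 m)) (nhi m k1 k2 (jj k1 k2 1 m))"
          unfolding nlo_simps(2)[OF m2 k12] nhi_simps(2)[OF m2 k12] mem_mk using bb c2 by simp
        then show ?thesis using inJ[OF memB(2)] by blast
      qed
    qed
  qed
qed


lemma boxval_mk: "boxval (mk k1 k2 a b c) (mk k1 k2 a' b' c') = G a a' * G b b' * G c c' ^ (CARD('n) - 2)"
  unfolding boxval_def by (rule prod_mk[OF k12])

lemma sum_gain:
  "(\<Sum>j\<in>(jitter_index m :: ('n \<Rightarrow> nat) set). boxval (jlo m j) (jhi m j)) < (\<Sum>j\<in>jitter_index m. boxval (nlo m k1 k2 j) (nhi m k1 k2 j))"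
proof -
  let ?J = "jitter_index m :: ('n \<Rightarrow> nat) set"
  let ?B = "B4 m k1 k2"
  define f where "f j = boxval (nlo m k1 k2 j) (nhi m k1 k2 j) - boxval (jlo m j) (jhi m j)" for j
  have finJ: "finite ?J" by (rule finite_jitter_index)
  have "(\<Sum>j\<in>?J. f j) = (\<Sum>j\<in>?J - ?B. f j) + (\<Sum>j\<in>?B. f j)"
    using B4_sub[OF m2 k12] finJ by (rule sum.subset_diff)
  also have "(\<Sum>j\<in>?J - ?B. f j) = 0"
    by (rule sum.neutral) (simp add: f_def nlo_simps(5)[OF m2 k12] nhi_simps(5)[OF m2 k12])
  also have "(\<Sum>j\<in>?B. f j) = f (jj k1 k2 1 (m-1)) + f (jj k1 k2 1 m) + f (jj k1 k2 2 m) + f (jj k1 k2 2 (m-1))"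
    using jj_ne[OF m2 k12] unfolding B4_def by (simp add: add.assoc)
  also have "\<dots> = G 0 (1/m) ^ (CARD('n) - 2) *
       ((G 0 (4/(3*m)) * G (1-2/m) (1-5/(4*m)) + G 0 (4/(3*m)) * G (1-5/(4*m)) (1-1/(2*m))
        + G 0 (2/m) * G (1-1/(2*m)) 1 + G (4/(3*m)) (2/m) * G (1-2/m) (1-1/(2*m)))
       - (G 0 (1/m) * G ((real m-2)/m) ((real m-1)/m) + G 0 (1/m) * G ((real m-1)/m) (real m/m)
        + G (1/m) (2/m) * G ((real m-2)/m) ((real m-1)/m) + G (1/m) (2/m) * G ((real m-1)/m) (real m/m)))"
    unfolding f_def nlo_simps[OF m2 k12] nhi_simps[OF m2 k12] jlo_jj[OF m2 k12] jhi_jj[OF m2 k12] boxval_mk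
    by (simp add: rm1[OF m2 k12] algebra_simps diff_divide_distrib)
  also have "\<dots> = G 0 (1/m) ^ (CARD('n) - 2) * ((3 * real m - 4) / (36 * (real m)^2))"
    using m2 Q_val[of "real m"] by simp
  finally have eq: "(\<Sum>j\<in>?J. f j) = G 0 (1/m) ^ (CARD('n) - 2) * ((3 * real m - 4) / (36 * (real m)^2))" by simp
  have "G 0 (1/m) > 0" using m2 by (simp add: G_def field_simps)
  moreover have "(3 * real m - 4) / (36 * (real m)^2) > 0" using m2 by (simp add: field_simps)
  ultimately have "(\<Sum>j\<in>?J. f j) > 0" unfolding eq by (intro mult_pos_pos zero_less_power)
  then show ?thesis by (simp add: f_def sum_subtractf)
qed

end

theorem theorem1:
  fixes m :: nat
  assumes "CARD('n::finite) \<ge> 2" and "m \<ge> 2"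
  shows "\<exists>\<Omega> :: nat \<Rightarrow> (real^'n) set.
           is_partition {..<m ^ CARD('n)} \<Omega> (cbox 0 1) \<and>
           is_equivolume {..<m ^ CARD('n)} \<Omega> \<and>
           is_convex_partition {..<m ^ CARD('n)} \<Omega> \<and>
           mean_L2_disc_sq {..<m ^ CARD('n)} \<Omega>
             < mean_L2_disc_sq (jitter_index m :: ('n \<Rightarrow> nat) set) (jittered m)"
proof -
  note m2 = assms(2)
  obtain k1 :: 'n where True by simp
  have c: "card (UNIV - {k1}) = CARD('n) - 1" by (simp add: card_Diff_subset)
  have "UNIV - {k1} \<noteq> {}"
  proof
    assume "UNIV - {k1} = {}"
    with c have "CARD('n) - 1 = 0" by simp
    with assms(1) show False by simp
  qed
  then obtain k2 where "k2 \<in> UNIV - {k1}" by blast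
  then have k12: "k1 \<noteq> k2" by auto
  define N where "N = m ^ CARD('n)"
  let ?J = "jitter_index m :: ('n \<Rightarrow> nat) set"
  have cardJ: "card ?J = N" by (simp add: N_def card_jitter_index)
  have Npos: "N > 0" using m2 by (simp add: N_def)
  obtain e where e: "bij_betw e {0..<card ?J} ?J"
    using ex_bij_betw_nat_finite[OF finite_jitter_index] by blast
  then have e': "bij_betw e {..<N} ?J" by (simp add: cardJ atLeast0LessThan)
  have eJ: "e i \<in> ?J" if "i \<in> {..<N}" for i using e' that by (auto simp: bij_betw_def)
  define lo where "lo i = nlo m k1 k2 (e i)" for i
  define hi where "hi i = nhi m k1 k2 (e i)" for i
  have cov: "(\<Union>i\<in>{..<N}. cbox (lo i) (hi i)) = cbox 0 1"
  proof -
    have "(\<Union>i\<in>{..<N}. cbox (lo i) (hi i)) = (\<Union>j\<in>e ` {..<N}. cbox (nlo m k1 k2 j) (nhi m k1 k2 j))"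
      by (simp add: lo_def hi_def)
    also have "e ` {..<N} = ?J" using e' by (simp add: bij_betw_def)
    finally show ?thesis using n_cover[OF m2 k12] by simp
  qed
  note BN = box_partition_mean[of "{..<N}" N lo hi, OF _ _ Npos n_nd[OF m2 k12, of "e _", folded lo_def hi_def]]
  have new: "is_partition {..<N} (\<lambda>i. cbox (lo i) (hi i)) (cbox 0 1)"
    "is_equivolume {..<N} (\<lambda>i. cbox (lo i) (hi i))"
    "is_convex_partition {..<N} (\<lambda>i. cbox (lo i) (hi i))"
    "mean_L2_disc_sq {..<N} (\<lambda>i. cbox (lo i) (hi i)) =
       (\<integral>x. (\<Prod>k\<in>UNIV. x$k) \<partial>lebesgue_on (cbox 0 (1::real^'n))) / real N
       - (\<Sum>i\<in>{..<N}. \<Prod>k\<in>UNIV. 1 - lo i $ k - 2 * (hi i $ k - lo i $ k) / 3) / (real N)\<^sup>2"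
    using BN[OF finite_lessThan card_lessThan _ _ cov]
      n_bnd[OF m2 k12 eJ] n_vol[OF m2 k12] by (simp_all add: lo_def hi_def N_def)
  have jnew: "mean_L2_disc_sq ?J (jittered m) =
       (\<integral>x. (\<Prod>k\<in>UNIV. x$k) \<partial>lebesgue_on (cbox 0 (1::real^'n))) / real N
       - (\<Sum>j\<in>?J. \<Prod>k\<in>UNIV. 1 - jlo m j $ k - 2 * (jhi m j $ k - jlo m j $ k) / 3) / (real N)\<^sup>2"
    unfolding jittered_eq
  proof (rule box_partition_mean(4)[OF finite_jitter_index cardJ Npos])
    show "jlo m j $ k < jhi m j $ k" for j k using m2 by (intro j_nd) simp
    show "0 \<le> jlo m j $ k \<and> jhi m j $ k \<le> 1" if "j \<in> ?J" for j k using m2 that by (intro j_bnd) auto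
    show "(\<Prod>k\<in>UNIV. jhi m j $ k - jlo m j $ k) = 1 / real N" if "j \<in> ?J" for j
      using m2 j_vol[of m j] by (simp add: N_def)
    show "(\<Union>j\<in>?J. cbox (jlo m j) (jhi m j)) = cbox 0 1" using m2 by (intro j_cover) simp
  qed
  have Seq: "(\<Sum>i\<in>{..<N}. \<Prod>k\<in>UNIV. 1 - lo i $ k - 2 * (hi i $ k - lo i $ k) / 3)
      = (\<Sum>j\<in>?J. boxval (nlo m k1 k2 j) (nhi m k1 k2 j))"
    unfolding lo_def hi_def sum.reindex_bij_betw[OF e', of "\<lambda>j. boxval (nlo m k1 k2 j) (nhi m k1 k2 j)", symmetric]
    by (simp add: boxval_def G_def)
  have Sj: "(\<Sum>j\<in>?J. \<Prod>k\<in>UNIV. 1 - jlo m j $ k - 2 * (jhi m j $ k - jlo m j $ k) / 3)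
      = (\<Sum>j\<in>?J. boxval (jlo m j) (jhi m j))"
    by (simp add: boxval_def G_def)
  have gain: "(\<Sum>j\<in>?J. boxval (jlo m j) (jhi m j)) < (\<Sum>j\<in>?J. boxval (nlo m k1 k2 j) (nhi m k1 k2 j))"
    by (rule sum_gain[OF m2 k12])
  have lt: "mean_L2_disc_sq {..<N} (\<lambda>i. cbox (lo i) (hi i)) < mean_L2_disc_sq ?J (jittered m)"
    unfolding new(4) jnew Seq Sj using gain Npos by (simp add: divide_strict_right_mono)
  show ?thesis
    using new(1-3) lt unfolding N_def by blast
qed

end
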